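(* Let $n=1$, $r\in\{-1,+1\}$ and $\Phi(x,y)=r\phi(x-y)$. Let $f:\mathbb R\to\mathbb R$, $f(x)=\max_{i\in\{1,2\}}\Phi(x,y_i)-\beta_i$ for some $y_i,\beta_i\in\mathbb R$. Then for every $(\bar x,\bar v)\in\operatorname{graph}\partial f$, $f(x)\ge f(\bar x)+r\phi(x-\bar x+(\phi^* )'(r\bar v))-r\phi((\phi^* )'(r\bar v))$ for all $x\in\mathbb R$; i.e. $f$ is a-strongly convex if $r=+1$ and a-weakly convex if $r=-1$.
   Context: Standing assumption (here with $n=1$): $\phi:\mathbb R\to\mathbb R$ is convex, finite-valued, differentiable and strictly convex, super-coercive; $\phi^*$ has the same properties and $(\phi^* )'=(\phi')^{-1}$. $\partial f$ is the limiting subdifferential. a-weak convexity: for every $(\bar x,\bar v)\in\operatorname{graph}\partial f$, $f(x)\ge f(\bar x)-\phi(x-\bar x+(\phi^* )'(-\bar v))+\phi((\phi^* )'(-\bar v))$ for all $x$; a-strong convexity: $f(x)\ge f(\bar x)+\phi(x-\bar x+(\phi^* )'(\bar v))-\phi((\phi^* )'(\bar v))$ for all $x$. *)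

theory Defs
  imports "HOL-Analysis.Analysis"
begin

definition strictly_convex :: "(real \<Rightarrow> real) \<Rightarrow> bool" where
  "strictly_convex g \<longleftrightarrow> (\<forall>x y t. x \<noteq> y \<and> 0 < t \<and> t < 1 \<longrightarrow>
      g ((1 - t) * x + t * y) < (1 - t) * g x + t * g y)"

definition super_coercive :: "(real \<Rightarrow> real) \<Rightarrow> bool" where
  "super_coercive g \<longleftrightarrow> filterlim (\<lambda>x. g x / \<bar>x\<bar>) at_top at_infinity"

definition conjugate :: "(real \<Rightarrow> real) \<Rightarrow> real \<Rightarrow> real" where
  "conjugate g v = (SUP x. v * x - g x)"

definition admissible_phi :: "(real \<Rightarrow> real) \<Rightarrow> bool" where
  "admissible_phi g \<longleftrightarrow> convex_on UNIV g \<and> (\<forall>x. g differentiable at x) \<and>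
      strictly_convex g \<and> super_coercive g"

definition frechet_subdiff :: "(real \<Rightarrow> real) \<Rightarrow> real \<Rightarrow> real set" where
  "frechet_subdiff f x = {v. \<forall>e>0. \<exists>d>0. \<forall>y. \<bar>y - x\<bar> < d \<longrightarrow>
      f y \<ge> f x + v * (y - x) - e * \<bar>y - x\<bar>}"

definition limiting_subdiff :: "(real \<Rightarrow> real) \<Rightarrow> real \<Rightarrow> real set" where
  "limiting_subdiff f x = {v. \<exists>xs vs. xs \<longlonglongrightarrow> x \<and> (\<lambda>k. f (xs k)) \<longlonglongrightarrow> f x \<and>
      vs \<longlonglongrightarrow> v \<and> (\<forall>k. vs k \<in> frechet_subdiff f (xs k))}"

end

theory Submission imports Defs begin

lemma grad_ineq:
  assumes "convex_on UNIV phi" "\<And>x. (phi has_real_derivative p x) (at x)"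
  shows "phi y - phi x \<ge> p x * (y - x)"
  using convex_on_imp_above_tangent[of UNIV phi x y "p x"] assms by auto

lemma p_strict:
  assumes "convex_on UNIV phi" "\<And>x. (phi has_real_derivative p x) (at x)"
    and sc: "strictly_convex phi" and ab: "a < (b::real)"
  shows "p a < p b"
proof -
  define m where "m = (1 - 1/2) * a + (1/2) * b"
  have "phi m < (1 - 1/2) * phi a + (1/2) * phi b"
    proof -
    have "a \<noteq> b" "(0::real) < 1/2" "(1/2::real) < 1" using ab by auto
    then show ?thesis using sc unfolding strictly_convex_def m_def by blast
  qed
  moreover have "phi m - phi a \<ge> p a * (m - a)" using grad_ineq assms by blast
  moreover have "phi a - phi b \<ge> p b * (a - b)" using grad_ineq assms by blast
  moreover have "m - a = (b - a)/2" unfolding m_def by simp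
  ultimately have h: "phi m < phi a / 2 + phi b / 2" "p a * (b - a) / 2 \<le> phi m - phi a"
     "p b * (b - a) \<ge> phi b - phi a" by (simp_all add: algebra_simps)
  then have "p a * (b - a) < p b * (b - a)" by linarith
  then show ?thesis using ab by simp
qed

lemma half_aux1: "x < (c+d)/2 \<Longrightarrow> c < d \<Longrightarrow> x < (d::real)" by (simp add: field_simps)
lemma half_aux2: "(c+d)/2 < x \<Longrightarrow> d < c \<Longrightarrow> d < (x::real)" by (simp add: field_simps)

lemma ev_left: "\<forall>\<^sub>F y in at_left (a::real). y < a"
  using eventually_at_left_real[of "a - 1" a, simplified] by (rule eventually_mono) auto

lemma p_cont:
  assumes cv: "convex_on UNIV phi" and d: "\<And>x. (phi has_real_derivative p x) (at x)"
    and mono: "\<And>a b. a \<le> b \<Longrightarrow> p a \<le> (p b::real)"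
  shows "isCont p a"
proof -
  have dq: "((\<lambda>y. (phi y - phi a) / (y - a)) \<longlongrightarrow> p a) (at a)"
    using d[of a] has_field_derivative_iff by blast
  have tr: "((\<lambda>y. (phi y - phi a) / (y - a)) \<longlongrightarrow> p a) (at_right a)"
   and tl: "((\<lambda>y. (phi y - phi a) / (y - a)) \<longlongrightarrow> p a) (at_left a)"
    using dq filterlim_at_split by blast+
  have cphi: "isCont phi x" for x using d DERIV_isCont by blast
  have R: "(p \<longlongrightarrow> p a) (at_right a)"
  proof (rule order_tendstoI)
    fix b assume "b < p a"
    show "\<forall>\<^sub>F y in at_right a. b < p y"
      using eventually_at_right_less[of a] by (rule eventually_mono) (metis mono \<open>b < p a\<close> less_imp_le order_less_le_trans)
  next
    fix b assume b: "p a < b"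
    have "\<forall>\<^sub>F y in at_right a. (phi y - phi a) / (y - a) < (p a + b)/2 \<and> a < y"
    proof (rule eventually_conj)
      show "\<forall>\<^sub>F y in at_right a. (phi y - phi a) / (y - a) < (p a + b)/2"
        using order_tendstoD(2)[OF tr, of "(p a + b)/2"] b by simp
    qed (rule eventually_at_right_less)
    then obtain z where z: "(phi z - phi a) / (z - a) < (p a + b)/2" "a < z"
      using eventually_happens[of _ "at_right a"] by auto
    have "((\<lambda>y. (phi z - phi y) / (z - y)) \<longlongrightarrow> (phi z - phi a) / (z - a)) (at a)"
      proof (rule tendsto_divide)
      show "((\<lambda>y. phi z - phi y) \<longlongrightarrow> phi z - phi a) (at a)"
        by (intro tendsto_diff tendsto_const) (use cphi isCont_def in blast)
    qed (use z(2) in \<open>auto intro!: tendsto_eq_intros\<close>)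
    moreover have zb: "(phi z - phi a) / (z - a) < b" by (rule half_aux1[OF z(1) b])
    ultimately have "\<forall>\<^sub>F y in at a. (phi z - phi y) / (z - y) < b"
      by (rule order_tendstoD(2))
    then have ev: "\<forall>\<^sub>F y in at_right a. (phi z - phi y) / (z - y) < b \<and> y < z"
      proof -
      assume h: "\<forall>\<^sub>F y in at a. (phi z - phi y) / (z - y) < b"
      have "\<forall>\<^sub>F y in at_right a. (phi z - phi y) / (z - y) < b" using h eventually_at_split by blast
      moreover have "\<forall>\<^sub>F y in at_right a. y < z"
        using eventually_at_right_real[OF z(2)] by (rule eventually_mono) simp
      ultimately show ?thesis by (rule eventually_conj)
    qed
    show "\<forall>\<^sub>F y in at_right a. p y < b"
    proof (rule eventually_mono[OF ev])
      fix y assume y: "(phi z - phi y) / (z - y) < b \<and> y < z"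
      have "phi z - phi y \<ge> p y * (z - y)" using grad_ineq cv d by blast
      then have "p y \<le> (phi z - phi y) / (z - y)" using y by (simp add: field_simps)
      then show "p y < b" using y by linarith
    qed
  qed
  have L: "(p \<longlongrightarrow> p a) (at_left a)"
  proof (rule order_tendstoI)
    fix b assume "p a < b"
    show "\<forall>\<^sub>F y in at_left a. p y < b"
      using ev_left[of a] by (rule eventually_mono) (metis mono \<open>p a < b\<close> less_imp_le order_le_less_trans)
  next
    fix b assume b: "b < p a"
    have "\<forall>\<^sub>F y in at_left a. (p a + b)/2 < (phi y - phi a) / (y - a) \<and> y < a"
    proof (rule eventually_conj)
      show "\<forall>\<^sub>F y in at_left a. (p a + b)/2 < (phi y - phi a) / (y - a)"
        using order_tendstoD(1)[OF tl, of "(p a + b)/2"] b by simp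
    qed (rule ev_left)
    then obtain z where z: "(p a + b)/2 < (phi z - phi a) / (z - a)" "z < a"
      using eventually_happens[of _ "at_left a"] by auto
    have "((\<lambda>y. (phi z - phi y) / (z - y)) \<longlongrightarrow> (phi z - phi a) / (z - a)) (at a)"
      proof (rule tendsto_divide)
      show "((\<lambda>y. phi z - phi y) \<longlongrightarrow> phi z - phi a) (at a)"
        by (intro tendsto_diff tendsto_const) (use cphi isCont_def in blast)
    qed (use z(2) in \<open>auto intro!: tendsto_eq_intros\<close>)
    moreover have zb: "b < (phi z - phi a) / (z - a)" by (rule half_aux2[OF z(1) b])
    ultimately have "\<forall>\<^sub>F y in at a. b < (phi z - phi y) / (z - y)"
      by (rule order_tendstoD(1))
    then have ev: "\<forall>\<^sub>F y in at_left a. b < (phi z - phi y) / (z - y) \<and> z < y"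
      proof -
      assume h: "\<forall>\<^sub>F y in at a. b < (phi z - phi y) / (z - y)"
      have "\<forall>\<^sub>F y in at_left a. b < (phi z - phi y) / (z - y)" using h eventually_at_split by blast
      moreover have "\<forall>\<^sub>F y in at_left a. z < y"
        using eventually_at_left_real[OF z(2)] by (rule eventually_mono) simp
      ultimately show ?thesis by (rule eventually_conj)
    qed
    show "\<forall>\<^sub>F y in at_left a. b < p y"
    proof (rule eventually_mono[OF ev])
      fix y assume y: "b < (phi z - phi y) / (z - y) \<and> z < y"
      have "phi z - phi y \<ge> p y * (z - y)" using grad_ineq cv d by blast
      then have "(phi z - phi y) / (z - y) \<le> p y" using y by (simp add: field_simps)
      then show "b < p y" using y by linarith
    qed
  qed
  show ?thesis unfolding isCont_def using L R filterlim_split_at by blast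
qed

lemma frechet_le:
  assumes v: "v \<in> frechet_subdiff f x"
    and ev: "\<And>e. e > 0 \<Longrightarrow> \<forall>\<^sub>F y in at_right x. f y \<le> f x + (c + e) * (y - x)"
  shows "v \<le> (c::real)"
proof (rule ccontr)
  assume "\<not> v \<le> c"
  define e where "e = (v - c) / 3"
  have e: "e > 0" using \<open>\<not> v \<le> c\<close> by (simp add: e_def)
  obtain d where d: "d > 0" "\<And>y. \<bar>y - x\<bar> < d \<Longrightarrow> f y \<ge> f x + v * (y - x) - e * \<bar>y - x\<bar>"
    using v e unfolding frechet_subdiff_def by blast
  have "\<forall>\<^sub>F y in at_right x. f y \<le> f x + (c + e) * (y - x) \<and> y \<in> {x<..<x+d}"
    using ev[OF e] eventually_at_right_real[of x "x + d"] d(1) by (auto intro: eventually_conj)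
  then obtain y where y: "f y \<le> f x + (c + e) * (y - x)" "x < y" "y < x + d"
    using eventually_happens[of _ "at_right x"] by auto
  have "f y \<ge> f x + v * (y - x) - e * (y - x)" using d(2)[of y] y by auto
  with y(1) have "(v - c - 2 * e) * (y - x) \<le> 0" by (simp add: algebra_simps)
  moreover have "(v - c - 2 * e) * (y - x) > 0" using e y(2) by (simp add: e_def)
  ultimately show False by linarith
qed

lemma frechet_ge:
  assumes v: "v \<in> frechet_subdiff f x"
    and ev: "\<And>e. e > 0 \<Longrightarrow> \<forall>\<^sub>F y in at_left x. f y \<le> f x + (c - e) * (y - x)"
  shows "(c::real) \<le> v"
proof (rule ccontr)
  assume "\<not> c \<le> v"
  define e where "e = (c - v) / 3"
  have e: "e > 0" using \<open>\<not> c \<le> v\<close> by (simp add: e_def)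
  obtain d where d: "d > 0" "\<And>y. \<bar>y - x\<bar> < d \<Longrightarrow> f y \<ge> f x + v * (y - x) - e * \<bar>y - x\<bar>"
    using v e unfolding frechet_subdiff_def by blast
  have "\<forall>\<^sub>F y in at_left x. f y \<le> f x + (c - e) * (y - x) \<and> y \<in> {x-d<..<x}"
  proof -
    have xd: "x - d < x" using d(1) by simp
    show ?thesis using eventually_conj[OF ev[OF e] eventually_at_left_real[OF xd]] .
  qed
  then obtain y where y: "f y \<le> f x + (c - e) * (y - x)" "y < x" "x - d < y"
    using eventually_happens[of _ "at_left x"] by auto
  have "f y \<ge> f x + v * (y - x) + e * (y - x)" using d(2)[of y] y by (auto simp: algebra_simps)
  with y(1) have "(c - v - 2 * e) * (y - x) \<ge> 0" by (simp add: algebra_simps)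
  moreover have "(c - v - 2 * e) * (y - x) < 0" using e y(2) by (simp add: e_def mult_pos_neg)
  ultimately show False by linarith
qed

lemma deriv_approx:
  assumes "(F has_real_derivative D) (at x)" "e > 0"
  shows "\<forall>\<^sub>F y in at x. \<bar>F y - F x - D * (y - x)\<bar> \<le> e * \<bar>y - x\<bar>"
proof -
  have "((\<lambda>y. (F y - F x) / (y - x)) \<longlongrightarrow> D) (at x)"
    using assms(1) has_field_derivative_iff by blast
  then have "\<forall>\<^sub>F y in at x. dist ((F y - F x) / (y - x)) D < e"
    using assms(2) tendstoD by blast
  moreover have "\<forall>\<^sub>F y in at x. y \<noteq> x" by (simp add: eventually_at_filter)
  ultimately have "\<forall>\<^sub>F y in at x. dist ((F y - F x) / (y - x)) D < e \<and> y \<noteq> x"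
    by (rule eventually_conj)
  then show ?thesis
  proof (rule eventually_mono)
    fix y assume "dist ((F y - F x) / (y - x)) D < e \<and> y \<noteq> x"
    then have "y \<noteq> x" "dist ((F y - F x) / (y - x)) D < e" by auto
    then have "\<bar>(F y - F x - D * (y - x)) / (y - x)\<bar> < e"
      by (simp add: dist_real_def diff_divide_distrib)
    then show "\<bar>F y - F x - D * (y - x)\<bar> \<le> e * \<bar>y - x\<bar>"
      using \<open>y \<noteq> x\<close> by (simp add: abs_divide divide_less_eq)
  qed
qed

lemma frechet_max_bounds:
  assumes d1: "\<And>y. (F1 has_real_derivative D1 y) (at y)"
    and d2: "\<And>y. (F2 has_real_derivative D2 y) (at y)"
    and f: "\<And>y. f y = max (F1 y) (F2 y)"
    and v: "v \<in> frechet_subdiff f x"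
  shows "min (D1 x) (D2 x) \<le> v \<and> v \<le> max (D1 x) (D2 x)"
proof
  have ap: "\<forall>\<^sub>F y in at x. \<bar>F1 y - F1 x - D1 x * (y - x)\<bar> \<le> e * \<bar>y - x\<bar>
      \<and> \<bar>F2 y - F2 x - D2 x * (y - x)\<bar> \<le> e * \<bar>y - x\<bar>" if "e > 0" for e
    using eventually_conj[OF deriv_approx[OF d1 that] deriv_approx[OF d2 that]] .
  show "v \<le> max (D1 x) (D2 x)"
  proof (rule frechet_le[OF v])
    fix e :: real assume e: "e > 0"
    have "\<forall>\<^sub>F y in at_right x. (\<bar>F1 y - F1 x - D1 x * (y - x)\<bar> \<le> e * \<bar>y - x\<bar>
      \<and> \<bar>F2 y - F2 x - D2 x * (y - x)\<bar> \<le> e * \<bar>y - x\<bar>) \<and> x < y"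
      using eventually_conj[OF _ eventually_at_right_less] ap[OF e] eventually_at_split by blast
    then show "\<forall>\<^sub>F y in at_right x. f y \<le> f x + (max (D1 x) (D2 x) + e) * (y - x)"
    proof (rule eventually_mono)
      fix y assume h: "(\<bar>F1 y - F1 x - D1 x * (y - x)\<bar> \<le> e * \<bar>y - x\<bar>
      \<and> \<bar>F2 y - F2 x - D2 x * (y - x)\<bar> \<le> e * \<bar>y - x\<bar>) \<and> x < y"
      have m1: "D1 x * (y - x) \<le> max (D1 x) (D2 x) * (y - x)" using h by (intro mult_right_mono) auto
      have m2: "D2 x * (y - x) \<le> max (D1 x) (D2 x) * (y - x)" using h by (intro mult_right_mono) auto
      have "F1 y \<le> f x + (max (D1 x) (D2 x) + e) * (y - x)"
        using h m1 f[of x] by (auto simp: algebra_simps abs_le_iff)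
      moreover have "F2 y \<le> f x + (max (D1 x) (D2 x) + e) * (y - x)"
        using h m2 f[of x] by (auto simp: algebra_simps abs_le_iff)
      ultimately show "f y \<le> f x + (max (D1 x) (D2 x) + e) * (y - x)" using f[of y] by simp
    qed
  qed
  show "min (D1 x) (D2 x) \<le> v"
  proof (rule frechet_ge[OF v])
    fix e :: real assume e: "e > 0"
    have "\<forall>\<^sub>F y in at_left x. (\<bar>F1 y - F1 x - D1 x * (y - x)\<bar> \<le> e * \<bar>y - x\<bar>
      \<and> \<bar>F2 y - F2 x - D2 x * (y - x)\<bar> \<le> e * \<bar>y - x\<bar>) \<and> y < x"
      using eventually_conj[OF _ ev_left] ap[OF e] eventually_at_split by blast
    then show "\<forall>\<^sub>F y in at_left x. f y \<le> f x + (min (D1 x) (D2 x) - e) * (y - x)"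
    proof (rule eventually_mono)
      fix y assume h: "(\<bar>F1 y - F1 x - D1 x * (y - x)\<bar> \<le> e * \<bar>y - x\<bar>
      \<and> \<bar>F2 y - F2 x - D2 x * (y - x)\<bar> \<le> e * \<bar>y - x\<bar>) \<and> y < x"
      have m1: "D1 x * (y - x) \<le> min (D1 x) (D2 x) * (y - x)" using h by (intro mult_right_mono_neg) auto
      have m2: "D2 x * (y - x) \<le> min (D1 x) (D2 x) * (y - x)" using h by (intro mult_right_mono_neg) auto
      have "F1 y \<le> f x + (min (D1 x) (D2 x) - e) * (y - x)"
        using h m1 f[of x] by (auto simp: algebra_simps abs_le_iff)
      moreover have "F2 y \<le> f x + (min (D1 x) (D2 x) - e) * (y - x)"
        using h m2 f[of x] by (auto simp: algebra_simps abs_le_iff)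
      ultimately show "f y \<le> f x + (min (D1 x) (D2 x) - e) * (y - x)" using f[of y] by simp
    qed
  qed
qed

lemma frechet_max_strict:
  assumes d1: "\<And>y. (F1 has_real_derivative D1 y) (at y)"
    and d2: "\<And>y. (F2 has_real_derivative D2 y) (at y)"
    and f: "\<And>y. f y = max (F1 y) (F2 y)"
    and v: "v \<in> frechet_subdiff f x"
    and lt: "F2 x < F1 x"
  shows "v = D1 x"
proof -
  have "isCont (\<lambda>y. F1 y - F2 y) x" using d1 d2 DERIV_isCont by (intro continuous_intros) blast+
  then have "\<forall>\<^sub>F y in at x. 0 < F1 y - F2 y"
    using lt by (intro order_tendstoD(1)) (auto simp: isCont_def)
  then have feq: "\<forall>\<^sub>F y in at x. f y = F1 y" by (rule eventually_mono) (simp add: f)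
  have ap: "\<forall>\<^sub>F y in at x. \<bar>F1 y - F1 x - D1 x * (y - x)\<bar> \<le> e * \<bar>y - x\<bar> \<and> f y = F1 y" if "e > 0" for e
    using eventually_conj[OF deriv_approx[OF d1 that] feq] .
  have fx: "f x = F1 x" using f lt by simp
  have "v \<le> D1 x"
  proof (rule frechet_le[OF v])
    fix e :: real assume e: "e > 0"
    have "\<forall>\<^sub>F y in at_right x. (\<bar>F1 y - F1 x - D1 x * (y - x)\<bar> \<le> e * \<bar>y - x\<bar> \<and> f y = F1 y) \<and> x < y"
      using eventually_conj[OF _ eventually_at_right_less] ap[OF e] eventually_at_split by blast
    then show "\<forall>\<^sub>F y in at_right x. f y \<le> f x + (D1 x + e) * (y - x)"
      by (rule eventually_mono) (auto simp: fx algebra_simps abs_le_iff)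
  qed
  moreover have "D1 x \<le> v"
  proof (rule frechet_ge[OF v])
    fix e :: real assume e: "e > 0"
    have "\<forall>\<^sub>F y in at_left x. (\<bar>F1 y - F1 x - D1 x * (y - x)\<bar> \<le> e * \<bar>y - x\<bar> \<and> f y = F1 y) \<and> y < x"
      using eventually_conj[OF _ ev_left] ap[OF e] eventually_at_split by blast
    then show "\<forall>\<^sub>F y in at_left x. f y \<le> f x + (D1 x - e) * (y - x)"
      by (rule eventually_mono) (auto simp: fx algebra_simps abs_le_iff)
  qed
  ultimately show ?thesis by simp
qed

lemma limiting_max:
  assumes d1: "\<And>y. (F1 has_real_derivative D1 y) (at y)"
    and d2: "\<And>y. (F2 has_real_derivative D2 y) (at y)"
    and c1: "\<And>y. isCont D1 y" and c2: "\<And>y. isCont D2 y"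
    and f: "\<And>y. f y = max (F1 y) (F2 y)"
    and v: "v \<in> limiting_subdiff f x"
  shows "min (D1 x) (D2 x) \<le> v \<and> v \<le> max (D1 x) (D2 x)"
    and "F2 x < F1 x \<Longrightarrow> v = D1 x"
proof -
  obtain xs vs where xs: "xs \<longlonglongrightarrow> x" and vs: "vs \<longlonglongrightarrow> v"
    and fr: "\<And>k. vs k \<in> frechet_subdiff f (xs k)"
    using v unfolding limiting_subdiff_def by blast
  have l1: "(\<lambda>k. D1 (xs k)) \<longlonglongrightarrow> D1 x" using isCont_tendsto_compose[OF c1 xs] .
  have l2: "(\<lambda>k. D2 (xs k)) \<longlonglongrightarrow> D2 x" using isCont_tendsto_compose[OF c2 xs] .
  have b: "min (D1 (xs k)) (D2 (xs k)) \<le> vs k \<and> vs k \<le> max (D1 (xs k)) (D2 (xs k))" for k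
    using frechet_max_bounds[OF d1 d2 f fr] .
  have "min (D1 x) (D2 x) \<le> v"
    using tendsto_le[OF trivial_limit_sequentially vs tendsto_min[OF l1 l2]] b by simp
  moreover have "v \<le> max (D1 x) (D2 x)"
    using tendsto_le[OF trivial_limit_sequentially tendsto_max[OF l1 l2] vs] b by simp
  ultimately show "min (D1 x) (D2 x) \<le> v \<and> v \<le> max (D1 x) (D2 x)" by simp
  assume lt: "F2 x < F1 x"
  have "isCont (\<lambda>y. F1 y - F2 y) x" using d1 d2 DERIV_isCont by (intro continuous_intros) blast+
  then have "(\<lambda>k. F1 (xs k) - F2 (xs k)) \<longlonglongrightarrow> F1 x - F2 x" using isCont_tendsto_compose[OF _ xs] by blast
  then have "\<forall>\<^sub>F k in sequentially. 0 < F1 (xs k) - F2 (xs k)"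
    using lt by (intro order_tendstoD(1)) auto
  then have "\<forall>\<^sub>F k in sequentially. D1 (xs k) = vs k"
    by (rule eventually_mono) (use frechet_max_strict[OF d1 d2 f fr] in force)
  then have "vs \<longlonglongrightarrow> D1 x" using l1 tendsto_cong by fastforce
  then show "v = D1 x" using vs LIMSEQ_unique by blast
qed

theorem mainTheorem15:
  fixes phi :: "real \<Rightarrow> real" and r y1 y2 b1 b2 :: real and f :: "real \<Rightarrow> real"
  assumes phi: "admissible_phi phi"
      and phistar: "admissible_phi (conjugate phi)"
      and phistar_deriv: "deriv (conjugate phi) = inv (deriv phi)"
      and r: "r \<in> {-1, 1}"
      and f_def: "\<And>x. f x = max (r * phi (x - y1) - b1) (r * phi (x - y2) - b2)"
  shows "\<forall>xb vb. vb \<in> limiting_subdiff f xb \<longrightarrow>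
           (\<forall>x. f x \<ge> f xb + r * phi (x - xb + deriv (conjugate phi) (r * vb))
                          - r * phi (deriv (conjugate phi) (r * vb)))"
proof (intro allI impI)
  fix xb vb x
  assume vb: "vb \<in> limiting_subdiff f xb"
  define p where "p = deriv phi"
  have cv: "convex_on UNIV phi" and sc: "strictly_convex phi" and dif: "\<And>x. phi differentiable at x"
    using phi unfolding admissible_phi_def by auto
  have dphi: "(phi has_real_derivative p y) (at y)" for y
    using dif DERIV_deriv_iff_real_differentiable p_def by blast
  have pst: "a < b \<Longrightarrow> p a < p b" for a b using p_strict[OF cv dphi sc] by blast
  have pmono: "a \<le> b \<Longrightarrow> p a \<le> p b" for a b using pst by (cases "a = b") (auto simp: less_imp_le)
  have pc: "isCont p y" for y using p_cont[OF cv dphi pmono] by blast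
  have injp: "inj p" by (rule inj_onI) (metis linorder_neq_iff pst less_irrefl)
  define F1 where "F1 y = r * phi (y - y1) - b1" for y
  define F2 where "F2 y = r * phi (y - y2) - b2" for y
  define D1 where "D1 y = r * p (y - y1)" for y
  define D2 where "D2 y = r * p (y - y2)" for y
  have d1: "(F1 has_real_derivative D1 y) (at y)" for y
    unfolding F1_def D1_def
    using DERIV_chain2[OF dphi DERIV_diff[OF DERIV_ident DERIV_const]]
    by (auto intro!: derivative_eq_intros)
  have d2: "(F2 has_real_derivative D2 y) (at y)" for y
    unfolding F2_def D2_def
    using DERIV_chain2[OF dphi DERIV_diff[OF DERIV_ident DERIV_const]]
    by (auto intro!: derivative_eq_intros)
  have c1: "isCont D1 y" for y unfolding D1_def
    by (intro continuous_intros isCont_o2[OF _ pc]) 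
  have c2: "isCont D2 y" for y unfolding D2_def
    by (intro continuous_intros isCont_o2[OF _ pc]) 
  have fF: "f y = max (F1 y) (F2 y)" for y using f_def F1_def F2_def by simp
  have fF': "f y = max (F2 y) (F1 y)" for y using fF by (simp add: max.commute)
  have rr: "r * r = 1" using r by auto
  have pd: "deriv (conjugate phi) = inv p" using phistar_deriv p_def by simp
  define a1 where "a1 = xb - y1"
  define a2 where "a2 = xb - y2"
  define h where "h = x - xb"
  have F1x: "F1 x = F1 xb + r * (phi (a1 + h) - phi a1)"
    unfolding F1_def a1_def h_def by (simp add: algebra_simps)
  have F2x: "F2 x = F2 xb + r * (phi (a2 + h) - phi a2)"
    unfolding F2_def a2_def h_def by (simp add: algebra_simps)
  have key: "f xb + r * phi (h + w) - r * phi w \<le> f x" if w: "p w = r * vb"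
    and H: "(F1 xb = f xb \<and> r * (phi (w + h) - phi w) \<le> r * (phi (a1 + h) - phi a1))
          \<or> (F2 xb = f xb \<and> r * (phi (w + h) - phi w) \<le> r * (phi (a2 + h) - phi a2))" for w
    using H F1x F2x fF[of x] by (auto simp: algebra_simps)
  have goal_eq: "x - xb + deriv (conjugate phi) (r * vb) = h + inv p (r * vb)"
    unfolding pd h_def by simp
  have "f xb + r * phi (h + inv p (r * vb)) - r * phi (inv p (r * vb)) \<le> f x"
  proof (cases "F2 xb < F1 xb")
    case True
    then have "vb = D1 xb" using limiting_max(2)[OF d1 d2 c1 c2 fF vb] by blast
    then have "p a1 = r * vb" using rr by (simp add: D1_def a1_def algebra_simps)
    then have "inv p (r * vb) = a1" using injp inv_f_eq by metis
    then show ?thesis using key[OF \<open>p a1 = r * vb\<close>] True fF[of xb] by simp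
  next
    case False
    note nF = False
    show ?thesis
    proof (cases "F1 xb < F2 xb")
      case True
      then have "vb = D2 xb" using limiting_max(2)[OF d2 d1 c2 c1 fF' vb] by blast
      then have "p a2 = r * vb" using rr by (simp add: D2_def a2_def algebra_simps)
      then have "inv p (r * vb) = a2" using injp inv_f_eq by metis
      then show ?thesis using key[OF \<open>p a2 = r * vb\<close>] True fF[of xb] by simp
    next
      case False
      then have eq: "F1 xb = f xb" "F2 xb = f xb" using nF fF[of xb] by auto
      have bd: "min (D1 xb) (D2 xb) \<le> vb \<and> vb \<le> max (D1 xb) (D2 xb)"
        using limiting_max(1)[OF d1 d2 c1 c2 fF vb] .
      define lo where "lo = min a1 a2"
      define hi where "hi = max a1 a2"
      have lohi: "lo \<le> hi" "(lo = a1 \<and> hi = a2) \<or> (lo = a2 \<and> hi = a1)"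
        unfolding lo_def hi_def by auto
      have plo: "p lo = min (p a1) (p a2)" and phi_: "p hi = max (p a1) (p a2)"
        unfolding lo_def hi_def using pmono by (auto simp: min_def max_def) (meson nle_le order.trans pmono)+
      have "p lo \<le> r * vb \<and> r * vb \<le> p hi"
        using r bd unfolding plo phi_ D1_def D2_def a1_def a2_def by (auto simp: min_def max_def split: if_splits)
      then obtain w where w: "lo \<le> w" "w \<le> hi" "p w = r * vb"
        using IVT[of p lo "r * vb" hi] lohi pc by blast
      then have iw: "inv p (r * vb) = w" using injp inv_f_eq by metis
      define G where "G a = phi (a + h) - phi a" for a
      have dG: "(G has_real_derivative (p (a + h) - p a)) (at a)" for a
        unfolding G_def
        using DERIV_chain2[OF dphi DERIV_add[OF DERIV_ident DERIV_const]] dphi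
        by (auto intro!: derivative_eq_intros)
      have Gm: "(G lo \<le> G w \<and> G w \<le> G hi) \<or> (G hi \<le> G w \<and> G w \<le> G lo)"
      proof (cases "h \<ge> 0")
        case True
        have "G lo \<le> G w" by (rule deriv_nonneg_imp_mono[OF dG]) (use True pmono w in auto)
        moreover have "G w \<le> G hi" by (rule deriv_nonneg_imp_mono[OF dG]) (use True pmono w in auto)
        ultimately show ?thesis by simp
      next
        case False
        have "G w \<le> G lo" by (rule deriv_nonpos_imp_antimono[OF dG]) (use False pmono w in auto)
        moreover have "G hi \<le> G w" by (rule deriv_nonpos_imp_antimono[OF dG]) (use False pmono w in auto)
        ultimately show ?thesis by simp
      qed
      have "r * G w \<le> r * G a1 \<or> r * G w \<le> r * G a2"
        using Gm lohi(2) r by auto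
      then show ?thesis unfolding iw using key[OF w(3)] eq unfolding G_def by blast
    qed
  qed
  then show "f xb + r * phi (x - xb + deriv (conjugate phi) (r * vb)) - r * phi (deriv (conjugate phi) (r * vb)) \<le> f x"
    unfolding pd h_def .
qed

end
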